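(* The group $\mathbb{G}=\mathrm{Aut}(\mathbf{R},<)$ is split.
   Context: $\mathbb{G}$ is the group of order-preserving bijections of $\mathbf{R}$, topologized so that pointwise stabilizers of finite subsets of $\mathbf{R}$ form a neighborhood basis of the identity; it is a pro-oligomorphic group. A pro-oligomorphic group $G$ is split if for every pro-oligomorphic group $H$ (Hausdorff, open subgroups form a neighborhood basis of $1$, $U\backslash H/V$ finite for open $U,V$), every transitive $(G\times H)$-set (action with open stabilizers) is isomorphic to $X\times Y$ for a transitive $G$-set $X$ and a transitive $H$-set $Y$. *)

theory Defs
  imports "HOL-Algebra.Group" "HOL-Analysis.Analysis"
begin

definition topological_group :: "('g, 'm) monoid_scheme \<Rightarrow> 'g topology \<Rightarrow> bool" where
  "topological_group G T \<longleftrightarrow>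
     group G \<and> topspace T = carrier G \<and>
     continuous_map (prod_topology T T) T (\<lambda>p. fst p \<otimes>\<^bsub>G\<^esub> snd p) \<and>
     continuous_map T T (\<lambda>x. inv\<^bsub>G\<^esub> x)"

definition open_subgroup :: "('g, 'm) monoid_scheme \<Rightarrow> 'g topology \<Rightarrow> 'g set \<Rightarrow> bool" where
  "open_subgroup G T U \<longleftrightarrow> subgroup U G \<and> openin T U"

definition double_cosets :: "('g, 'm) monoid_scheme \<Rightarrow> 'g set \<Rightarrow> 'g set \<Rightarrow> 'g set set" where
  "double_cosets G U V =
     (\<lambda>g. {u \<otimes>\<^bsub>G\<^esub> g \<otimes>\<^bsub>G\<^esub> v | u v. u \<in> U \<and> v \<in> V}) ` carrier G"

definition pro_oligomorphic :: "('g, 'm) monoid_scheme \<Rightarrow> 'g topology \<Rightarrow> bool" where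
  "pro_oligomorphic G T \<longleftrightarrow>
     topological_group G T \<and> Hausdorff_space T \<and>
     (\<forall>W. openin T W \<and> \<one>\<^bsub>G\<^esub> \<in> W \<longrightarrow> (\<exists>U. open_subgroup G T U \<and> U \<subseteq> W)) \<and>
     (\<forall>U V. open_subgroup G T U \<and> open_subgroup G T V \<longrightarrow> finite (double_cosets G U V))"

definition is_action :: "('g, 'm) monoid_scheme \<Rightarrow> 'x set \<Rightarrow> ('g \<Rightarrow> 'x \<Rightarrow> 'x) \<Rightarrow> bool" where
  "is_action G E act \<longleftrightarrow>
     (\<forall>g \<in> carrier G. \<forall>x \<in> E. act g x \<in> E) \<and>
     (\<forall>x \<in> E. act \<one>\<^bsub>G\<^esub> x = x) \<and>
     (\<forall>g \<in> carrier G. \<forall>h \<in> carrier G. \<forall>x \<in> E. act (g \<otimes>\<^bsub>G\<^esub> h) x = act g (act h x))"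

text \<open>A G-set in the sense of the paper: an action with open stabilizers.\<close>
definition smooth_action :: "('g, 'm) monoid_scheme \<Rightarrow> 'g topology \<Rightarrow> 'x set \<Rightarrow> ('g \<Rightarrow> 'x \<Rightarrow> 'x) \<Rightarrow> bool" where
  "smooth_action G T E act \<longleftrightarrow>
     is_action G E act \<and> (\<forall>x \<in> E. openin T {g \<in> carrier G. act g x = x})"

definition transitive_action :: "('g, 'm) monoid_scheme \<Rightarrow> 'x set \<Rightarrow> ('g \<Rightarrow> 'x \<Rightarrow> 'x) \<Rightarrow> bool" where
  "transitive_action G E act \<longleftrightarrow>
     E \<noteq> {} \<and> (\<forall>x \<in> E. \<forall>y \<in> E. \<exists>g \<in> carrier G. act g x = y)"

definition transitive_G_set :: "('g, 'm) monoid_scheme \<Rightarrow> 'g topology \<Rightarrow> 'x set \<Rightarrow> ('g \<Rightarrow> 'x \<Rightarrow> 'x) \<Rightarrow> bool" where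
  "transitive_G_set G T E act \<longleftrightarrow> smooth_action G T E act \<and> transitive_action G E act"

definition G_set_iso :: "('g, 'm) monoid_scheme \<Rightarrow> 'x set \<Rightarrow> ('g \<Rightarrow> 'x \<Rightarrow> 'x)
      \<Rightarrow> 'y set \<Rightarrow> ('g \<Rightarrow> 'y \<Rightarrow> 'y) \<Rightarrow> bool" where
  "G_set_iso G E act E' act' \<longleftrightarrow>
     (\<exists>f. bij_betw f E E' \<and> (\<forall>g \<in> carrier G. \<forall>x \<in> E. f (act g x) = act' g (f x)))"

definition prod_action :: "('g \<Rightarrow> 'x \<Rightarrow> 'x) \<Rightarrow> ('h \<Rightarrow> 'y \<Rightarrow> 'y) \<Rightarrow> ('g \<times> 'h) \<Rightarrow> ('x \<times> 'y) \<Rightarrow> ('x \<times> 'y)" where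
  "prod_action a b = (\<lambda>(g, h) (x, y). (a g x, b h y))"

definition AutR :: "(real \<Rightarrow> real) monoid" where
  "AutR = \<lparr>carrier = {f. bij f \<and> strict_mono f}, monoid.mult = (\<circ>), one = id\<rparr>"

text \<open>Topology of pointwise convergence (discrete R): the open sets are those W such that
  every f in W has a basic neighbourhood f \<circ> Stab(A) = {g. g agrees with f on A}, A finite,
  contained in W.\<close>
definition AutR_open :: "(real \<Rightarrow> real) set \<Rightarrow> bool" where
  "AutR_open W \<longleftrightarrow> W \<subseteq> carrier AutR \<and>
     (\<forall>f \<in> W. \<exists>A. finite A \<and> {g \<in> carrier AutR. \<forall>a \<in> A. g a = f a} \<subseteq> W)"

lemma istopology_AutR_open: "istopology AutR_open"
  unfolding istopology_def
proof (intro conjI allI impI)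
  fix S T assume S: "AutR_open S" and T: "AutR_open T"
  show "AutR_open (S \<inter> T)"
    unfolding AutR_open_def
  proof (intro conjI ballI)
    show "S \<inter> T \<subseteq> carrier AutR" using S unfolding AutR_open_def by blast
    fix f assume f: "f \<in> S \<inter> T"
    obtain A where A: "finite A" "{g \<in> carrier AutR. \<forall>a \<in> A. g a = f a} \<subseteq> S"
      using S f unfolding AutR_open_def by blast
    obtain B where B: "finite B" "{g \<in> carrier AutR. \<forall>a \<in> B. g a = f a} \<subseteq> T"
      using T f unfolding AutR_open_def by blast
    show "\<exists>C. finite C \<and> {g \<in> carrier AutR. \<forall>a \<in> C. g a = f a} \<subseteq> S \<inter> T"
      by (rule exI[of _ "A \<union> B"]) (use A B in auto)
  qed
next
  fix K assume K: "\<forall>S\<in>K. AutR_open S"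
  show "AutR_open (\<Union>K)"
    unfolding AutR_open_def
  proof (intro conjI ballI)
    show "\<Union>K \<subseteq> carrier AutR" using K unfolding AutR_open_def by blast
    fix f assume "f \<in> \<Union>K"
    then obtain S where "S \<in> K" "f \<in> S" by blast
    then obtain A where "finite A" "{g \<in> carrier AutR. \<forall>a \<in> A. g a = f a} \<subseteq> S"
      using K unfolding AutR_open_def by blast
    then show "\<exists>A. finite A \<and> {g \<in> carrier AutR. \<forall>a \<in> A. g a = f a} \<subseteq> \<Union>K"
      using \<open>S \<in> K\<close> by blast
  qed
qed

definition AutR_top :: "(real \<Rightarrow> real) topology" where
  "AutR_top = topology AutR_open"

end

theory Submission
  imports Defs
begin

abbreviation Gc :: "(real \<Rightarrow> real) set" where "Gc \<equiv> carrier AutR"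

lemma Gc_iff: "f \<in> Gc \<longleftrightarrow> bij f \<and> strict_mono f"
  by (simp add: AutR_def)

lemma strict_mono_inv:
  fixes f :: "real \<Rightarrow> real"
  assumes "bij f" "strict_mono f" shows "strict_mono (inv_into UNIV f)"
proof (rule strict_monoI)
  fix x y :: real assume "x < y"
  show "inv_into UNIV f x < inv_into UNIV f y"
  proof (rule ccontr)
    assume "\<not> inv_into UNIV f x < inv_into UNIV f y"
    hence "inv_into UNIV f y \<le> inv_into UNIV f x" by simp
    hence "f (inv_into UNIV f y) \<le> f (inv_into UNIV f x)" using assms(2) strict_mono_less_eq by blast
    thus False using \<open>x < y\<close> assms(1) by (simp add: bij_is_surj surj_f_inv_f)
  qed
qed

lemma Gc_inv: "f \<in> Gc \<Longrightarrow> inv_into UNIV f \<in> Gc"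
  by (simp add: Gc_iff bij_imp_bij_inv strict_mono_inv)

lemma Gc_comp: "f \<in> Gc \<Longrightarrow> g \<in> Gc \<Longrightarrow> f \<circ> g \<in> Gc"
  by (auto simp: Gc_iff bij_comp strict_mono_def)

lemma Gc_id: "id \<in> Gc"
  by (simp add: Gc_iff strict_mono_def)

lemma Gc_inv_l: "f \<in> Gc \<Longrightarrow> inv_into UNIV f (f x) = x"
  by (simp add: Gc_iff bij_is_inj)

lemma Gc_inv_r: "f \<in> Gc \<Longrightarrow> f (inv_into UNIV f x) = x"
  by (simp add: Gc_iff bij_is_surj surj_f_inv_f)

definition bump :: "real \<Rightarrow> real \<Rightarrow> real \<Rightarrow> real \<Rightarrow> real \<Rightarrow> real" where
  "bump l x x' r t = (if t \<le> l \<or> r \<le> t then t else if t \<le> x then l + (t - l) * ((x' - l) / (x - l))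
      else x' + (t - x) * ((r - x') / (r - x)))"

lemma bump_range1:
  assumes "l < x" "x < r" "l < x'" "x' < r" "l < t" "t \<le> x"
  shows "l < bump l x x' r t" "bump l x x' r t \<le> x'"
proof -
  have b: "bump l x x' r t = l + (t - l) * ((x' - l) / (x - l))" using assms by (simp add: bump_def)
  have "(t - l) * ((x' - l) / (x - l)) > 0" using assms by simp
  thus "l < bump l x x' r t" using b by simp
  have "(t - l) * ((x' - l) / (x - l)) \<le> (x - l) * ((x' - l) / (x - l))"
    using assms by (intro mult_right_mono) auto
  also have "\<dots> = x' - l" using assms by simp
  finally show "bump l x x' r t \<le> x'" using b by simp
qed

lemma bump_range2:
  assumes "l < x" "x < r" "l < x'" "x' < r" "x < t" "t < r"
  shows "x' < bump l x x' r t" "bump l x x' r t < r"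
proof -
  have b: "bump l x x' r t = x' + (t - x) * ((r - x') / (r - x))" using assms by (simp add: bump_def)
  have "(t - x) * ((r - x') / (r - x)) > 0" using assms by simp
  thus "x' < bump l x x' r t" using b by simp
  have "(t - x) * ((r - x') / (r - x)) < (r - x) * ((r - x') / (r - x))"
    using assms by (intro mult_strict_right_mono) auto
  also have "\<dots> = r - x'" using assms by simp
  finally show "bump l x x' r t < r" using b by simp
qed

lemma bump_inv:
  assumes "l < x" "x < r" "l < x'" "x' < r"
  shows "bump l x' x r (bump l x x' r t) = t"
proof -
  consider "t \<le> l \<or> r \<le> t" | "l < t" "t \<le> x" | "x < t" "t < r" by linarith
  thus ?thesis
  proof cases
    case 1 thus ?thesis by (simp add: bump_def)
  next
    case 2
    note r = bump_range1[OF assms 2]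
    have "bump l x' x r (bump l x x' r t) = l + (bump l x x' r t - l) * ((x - l) / (x' - l))"
      using r assms by (simp add: bump_def)
    also have "\<dots> = t" using 2 assms by (simp add: bump_def)
    finally show ?thesis .
  next
    case 3
    note r = bump_range2[OF assms 3]
    have "bump l x' x r (bump l x x' r t) = x + (bump l x x' r t - x') * ((r - x) / (r - x'))"
      using r assms by (simp add: bump_def)
    also have "\<dots> = t" using 3 assms by (simp add: bump_def)
    finally show ?thesis .
  qed
qed

lemma bump_mono:
  assumes "l < x" "x < r" "l < x'" "x' < r"
  shows "strict_mono (bump l x x' r)"
proof (rule strict_monoI)
  fix s t :: real assume st: "s < t"
  note R1 = bump_range1[OF assms] and R2 = bump_range2[OF assms]
  consider "s \<le> l" | "l < s" "s \<le> x" | "x < s" "s < r" | "r \<le> s" by linarith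
  thus "bump l x x' r s < bump l x x' r t"
  proof cases
    case 1
    consider "t \<le> l" | "l < t" "t \<le> x" | "x < t" "t < r" | "r \<le> t" by linarith
    thus ?thesis
    proof cases
      case 1 thus ?thesis using \<open>s \<le> l\<close> st by (simp add: bump_def)
    next
      case 2 thus ?thesis using \<open>s \<le> l\<close> R1(1)[of t] by (simp add: bump_def[of _ _ _ _ s])
    next
      case 3 thus ?thesis using \<open>s \<le> l\<close> R2(1)[of t] assms by (simp add: bump_def[of _ _ _ _ s])
    next
      case 4 thus ?thesis using \<open>s \<le> l\<close> st by (simp add: bump_def)
    qed
  next
    case 2
    consider "t \<le> x" | "x < t" "t < r" | "r \<le> t" by linarith
    thus ?thesis
    proof cases
      case 1
      have "(s - l) * ((x' - l) / (x - l)) < (t - l) * ((x' - l) / (x - l))"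
        using st assms by (intro mult_strict_right_mono) auto
      thus ?thesis using 1 2 st assms by (simp add: bump_def)
    next
      case 3 thus ?thesis using R1(2)[OF 2] assms by (simp add: bump_def[of _ _ _ _ t])
    next
      case b: 2 thus ?thesis using R1(2)[OF 2] R2(1)[OF b] by simp
    qed
  next
    case 3
    consider "t < r" | "r \<le> t" by linarith
    thus ?thesis
    proof cases
      case 1
      have "(s - x) * ((r - x') / (r - x)) < (t - x) * ((r - x') / (r - x))"
        using st assms by (intro mult_strict_right_mono) auto
      thus ?thesis using 1 3 st assms by (simp add: bump_def)
    next
      case 2 thus ?thesis using R2(2)[OF 3] by (simp add: bump_def[of _ _ _ _ t])
    qed
  next
    case 4 thus ?thesis using st by (simp add: bump_def)
  qed
qed

lemma bump_Gc:
  assumes "l < x" "x < r" "l < x'" "x' < r"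
  shows "bump l x x' r \<in> Gc" "bump l x x' r x = x'" "\<And>t. t \<le> l \<or> r \<le> t \<Longrightarrow> bump l x x' r t = t"
proof -
  have "bump l x x' r \<circ> bump l x' x r = id" "bump l x' x r \<circ> bump l x x' r = id"
    using bump_inv[OF assms] bump_inv[of l x' r x] assms by (auto simp: fun_eq_iff)
  hence "bij (bump l x x' r)" using o_bij by blast
  thus "bump l x x' r \<in> Gc" using bump_mono[OF assms] by (simp add: Gc_iff)
  show "bump l x x' r x = x'" using assms by (simp add: bump_def)
  show "\<And>t. t \<le> l \<or> r \<le> t \<Longrightarrow> bump l x x' r t = t" by (simp add: bump_def)
qed

definition Stab :: "real set \<Rightarrow> (real \<Rightarrow> real) set" where
  "Stab C = {g \<in> Gc. \<forall>c\<in>C. g c = c}"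

definition subgrp :: "(real \<Rightarrow> real) set \<Rightarrow> bool" where
  "subgrp K \<longleftrightarrow> K \<subseteq> Gc \<and> (\<forall>a\<in>K. \<forall>b\<in>K. a \<circ> b \<in> K) \<and> (\<forall>a\<in>K. inv_into UNIV a \<in> K)"

lemma exists_bump:
  fixes F :: "real set"
  assumes "finite F" "b \<le> y" "\<forall>f\<in>F. f < b \<or> y < f"
  shows "\<exists>h\<in>Gc. h b = y \<and> (\<forall>f\<in>F. h f = f)"
proof (cases "b = y")
  case True thus ?thesis using Gc_id by (intro bexI[of _ id]) auto
next
  case False
  hence hby: "b < y" using assms by simp
  define F1 where "F1 = {f\<in>F. f < b}"
  define F2 where "F2 = {f\<in>F. y < f}"
  have fin: "finite F1" "finite F2" using assms(1) by (auto simp: F1_def F2_def)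
  define l where "l = (if F1 = {} then b - 1 else (Max F1 + b) / 2)"
  define r where "r = (if F2 = {} then y + 1 else (Min F2 + y) / 2)"
  have lb: "l < b"
  proof (cases "F1 = {}")
    case False
    hence "Max F1 \<in> F1" using fin by simp
    hence "Max F1 < b" by (simp add: F1_def)
    thus ?thesis using False by (simp add: l_def)
  qed (simp add: l_def)
  have yr: "y < r"
  proof (cases "F2 = {}")
    case False
    hence "Min F2 \<in> F2" using fin by simp
    hence "y < Min F2" by (simp add: F2_def)
    thus ?thesis using False by (simp add: r_def)
  qed (simp add: r_def)
  have Fout: "f \<le> l \<or> r \<le> f" if "f \<in> F" for f
  proof -
    have "f < b \<or> y < f" using assms(3) that by blast
    thus ?thesis
    proof
      assume "f < b"
      hence "f \<in> F1" using that by (simp add: F1_def)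
      hence "F1 \<noteq> {}" "f \<le> Max F1" using fin by auto
      moreover have "Max F1 < b" using \<open>F1 \<noteq> {}\<close> fin Max_in F1_def by fastforce
      ultimately show ?thesis by (simp add: l_def)
    next
      assume "y < f"
      hence "f \<in> F2" using that by (simp add: F2_def)
      hence "F2 \<noteq> {}" "Min F2 \<le> f" using fin by auto
      moreover have "y < Min F2" using \<open>F2 \<noteq> {}\<close> fin Min_in F2_def by fastforce
      ultimately show ?thesis by (simp add: r_def)
    qed
  qed
  have a: "l < b" "b < r" "l < y" "y < r" using lb yr hby by auto
  show ?thesis
    using bump_Gc[OF a] Fout by (intro bexI[of _ "bump l b y r"]) auto
qed


lemma conj_Stab:
  assumes K: "subgrp K" and p: "p \<in> Gc" and C: "Stab C \<subseteq> K"
    and pK: "\<forall>k\<in>K. p \<circ> k \<circ> inv_into UNIV p \<in> K"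
  shows "Stab (p ` C) \<subseteq> K"
proof
  fix f assume f: "f \<in> Stab (p ` C)"
  let ?q = "inv_into UNIV p"
  have fG: "f \<in> Gc" using f by (simp add: Stab_def)
  have "?q \<circ> f \<circ> p \<in> Stab C"
    using f p Gc_inv[OF p] fG by (auto simp: Stab_def Gc_comp Gc_inv_l)
  hence "p \<circ> (?q \<circ> f \<circ> p) \<circ> ?q \<in> K" using C pK by blast
  moreover have "p \<circ> (?q \<circ> f \<circ> p) \<circ> ?q = f"
    using p by (auto simp: fun_eq_iff Gc_inv_l Gc_inv_r)
  ultimately show "f \<in> K" by simp
qed

lemma subgrp_conj: "subgrp K \<Longrightarrow> p \<in> K \<Longrightarrow> \<forall>k\<in>K. p \<circ> k \<circ> inv_into UNIV p \<in> K"
  unfolding subgrp_def by blast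

lemma gen1_aux:
  assumes K: "subgrp K" and fin: "finite A" "finite B" and SA: "Stab A \<subseteq> K" and SB: "Stab B \<subseteq> K"
    and bB: "b \<in> B" and bA: "b \<notin> A"
    and g: "g \<in> Stab (B - {b})" and gb: "b \<le> g b"
  shows "g \<in> K"
proof (cases "g b = b")
  case True
  hence "g \<in> Stab B" using g by (auto simp: Stab_def)
  thus ?thesis using SB by blast
next
  case False
  define y where "y = g b"
  have hby: "b < y" using False gb by (simp add: y_def)
  have gG: "g \<in> Gc" and gfix: "\<forall>c\<in>B - {b}. g c = c" using g by (auto simp: Stab_def)
  have Bout: "c < b \<or> y < c" if "c \<in> B - {b}" for c
  proof (cases "c < b")
    case False
    hence "b < c" using that by auto
    hence "g b < g c" using gG by (simp add: Gc_iff strict_mono_less)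
    thus ?thesis using gfix that by (simp add: y_def)
  qed simp
  have "\<exists>u\<in>Stab B. \<forall>a\<in>A. u a < b \<or> y < u a"
  proof -
    define A2 where "A2 = {a\<in>A. b < a}"
    have finA2: "finite A2" using fin by (simp add: A2_def)
    show ?thesis
    proof (cases "A2 = {} \<or> y < Min A2")
      case True
      have "\<forall>a\<in>A. id a < b \<or> y < id a"
      proof
        fix a assume a: "a \<in> A"
        show "id a < b \<or> y < id a"
        proof (cases "a < b")
          case False
          hence "a \<in> A2" using a bA by (auto simp: A2_def) (metis antisym_conv3)
          hence "Min A2 \<le> a" using finA2 by simp
          thus ?thesis using True \<open>a \<in> A2\<close> by auto
        qed simp
      qed
      moreover have "id \<in> Stab B" using Gc_id by (simp add: Stab_def)
      ultimately show ?thesis by blast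
    next
      case False
      hence ne: "A2 \<noteq> {}" and c0y: "Min A2 \<le> y" by auto
      define c0 where "c0 = Min A2"
      have c0A2: "c0 \<in> A2" using ne finA2 by (simp add: c0_def)
      hence bc0: "b < c0" by (simp add: A2_def)
      define B2 where "B2 = {c\<in>B. y < c}"
      have finB2: "finite B2" using fin by (simp add: B2_def)
      define r where "r = (if B2 = {} then y + 1 else Min B2)"
      have yr: "y < r"
      proof (cases "B2 = {}")
        case False
        hence "Min B2 \<in> B2" using finB2 by simp
        thus ?thesis using False by (simp add: r_def B2_def)
      qed (simp add: r_def)
      define x' where "x' = (y + r) / 2"
      have x'y: "y < x'" "x' < r" using yr by (auto simp: x'_def)
      have "\<forall>f\<in>B. f < c0 \<or> x' < f"
      proof
        fix f assume f: "f \<in> B"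
        show "f < c0 \<or> x' < f"
        proof (cases "f = b")
          case True thus ?thesis using bc0 by simp
        next
          case False
          hence "f < b \<or> y < f" using Bout f by blast
          thus ?thesis
          proof
            assume "y < f"
            hence "f \<in> B2" using f by (simp add: B2_def)
            hence "r \<le> f" using finB2 by (auto simp: r_def)
            thus ?thesis using x'y by simp
          qed (use bc0 in simp)
        qed
      qed
      then obtain u where u: "u \<in> Gc" "u c0 = x'" "\<forall>f\<in>B. u f = f"
        using exists_bump[OF fin(2), of c0 x'] c0y x'y by (auto simp: c0_def)
      have "\<forall>a\<in>A. u a < b \<or> y < u a"
      proof
        fix a assume a: "a \<in> A"
        have sm: "strict_mono u" using u(1) by (simp add: Gc_iff)
        show "u a < b \<or> y < u a"
        proof (cases "a < b")
          case True
          hence "u a < u b" using sm by (simp add: strict_mono_less)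
          thus ?thesis using u(3) bB by simp
        next
          case False
          hence "a \<in> A2" using a bA by (auto simp: A2_def) (metis antisym_conv3)
          hence "c0 \<le> a" using finA2 by (simp add: c0_def)
          hence "u c0 \<le> u a" using sm by (simp add: strict_mono_less_eq)
          thus ?thesis using u(2) x'y by simp
        qed
      qed
      moreover have "u \<in> Stab B" using u by (simp add: Stab_def)
      ultimately show ?thesis by blast
    qed
  qed
  then obtain u where u: "u \<in> Stab B" "\<forall>a\<in>A. u a < b \<or> y < u a" by blast
  have uK: "u \<in> K" using u SB by blast
  have uG: "u \<in> Gc" using u by (simp add: Stab_def)
  have SuA: "Stab (u ` A) \<subseteq> K"
    using conj_Stab[OF K uG SA subgrp_conj[OF K uK]] .
  have "\<forall>f\<in>u ` A \<union> (B - {b}). f < b \<or> y < f" using u(2) Bout by blast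
  then obtain h where h: "h \<in> Gc" "h b = y" "\<forall>f\<in>u ` A \<union> (B - {b}). h f = f"
    using exists_bump[of "u ` A \<union> (B - {b})" b y] fin hby by auto
  have hK: "h \<in> K" using h SuA by (auto simp: Stab_def)
  let ?hi = "inv_into UNIV h"
  have hiG: "?hi \<in> Gc" using Gc_inv[OF h(1)] .
  have hi_fix: "?hi c = c" if "h c = c" for c
    using Gc_inv_l[OF h(1), of c] that by simp
  have "?hi \<circ> g \<in> Stab B"
    unfolding Stab_def
  proof (intro CollectI conjI ballI)
    show "?hi \<circ> g \<in> Gc" using Gc_comp[OF hiG gG] .
    fix c assume c: "c \<in> B"
    show "(?hi \<circ> g) c = c"
    proof (cases "c = b")
      case True thus ?thesis using h(2) Gc_inv_l[OF h(1), of b] by (simp add: y_def)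
    next
      case False thus ?thesis using gfix h(3) hi_fix c by simp
    qed
  qed
  hence "?hi \<circ> g \<in> K" using SB by blast
  hence "h \<circ> (?hi \<circ> g) \<in> K" using hK K by (simp add: subgrp_def)
  moreover have "h \<circ> (?hi \<circ> g) = g" using Gc_inv_r[OF h(1)] by (simp add: fun_eq_iff)
  ultimately show ?thesis by simp
qed


lemma gen1:
  assumes K: "subgrp K" and fin: "finite A" "finite B" and SA: "Stab A \<subseteq> K" and SB: "Stab B \<subseteq> K"
    and bB: "b \<in> B" and bA: "b \<notin> A"
  shows "Stab (B - {b}) \<subseteq> K"
proof
  fix g assume g: "g \<in> Stab (B - {b})"
  show "g \<in> K"
  proof (cases "b \<le> g b")
    case True thus ?thesis using gen1_aux[OF assms g] by simp
  next
    case False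
    have gG: "g \<in> Gc" using g by (simp add: Stab_def)
    let ?gi = "inv_into UNIV g"
    have giG: "?gi \<in> Gc" using Gc_inv[OF gG] .
    have "?gi c = c" if "c \<in> B - {b}" for c
      using Gc_inv_l[OF gG, of c] g that by (simp add: Stab_def)
    hence "?gi \<in> Stab (B - {b})" using giG by (simp add: Stab_def)
    moreover have "b \<le> ?gi b"
    proof -
      have "g b < b" using False by simp
      hence "?gi (g b) < ?gi b" using giG by (simp add: Gc_iff strict_mono_less)
      thus ?thesis using Gc_inv_l[OF gG] by simp
    qed
    ultimately have "?gi \<in> K" using gen1_aux[OF assms] by blast
    hence "inv_into UNIV ?gi \<in> K" using K by (simp add: subgrp_def)
    moreover have "inv_into UNIV ?gi = g" using gG by (simp add: Gc_iff inv_inv_eq)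
    ultimately show ?thesis by simp
  qed
qed

lemma gen_full:
  assumes K: "subgrp K" and fin: "finite A" and SA: "Stab A \<subseteq> K"
  shows "finite B \<Longrightarrow> Stab B \<subseteq> K \<Longrightarrow> Stab (A \<inter> B) \<subseteq> K"
proof (induction "card (B - A)" arbitrary: B rule: less_induct)
  case (less B)
  show ?case
  proof (cases "B \<subseteq> A")
    case True
    hence "A \<inter> B = B" by blast
    thus ?thesis using less by simp
  next
    case False
    then obtain b where b: "b \<in> B" "b \<notin> A" by blast
    have S: "Stab (B - {b}) \<subseteq> K" using gen1[OF K fin less(2) SA less(3) b] .
    have "card ((B - {b}) - A) < card (B - A)"
      using b less(2) by (intro psubset_card_mono) auto
    hence "Stab (A \<inter> (B - {b})) \<subseteq> K" using less S by simp
    moreover have "A \<inter> (B - {b}) = A \<inter> B" using b by blast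
    ultimately show ?thesis by simp
  qed
qed

lemma perm_fix:
  fixes p :: "real \<Rightarrow> real"
  assumes sm: "strict_mono p" and fin: "finite C" and pC: "p ` C = C"
  shows "\<forall>c\<in>C. p c = c"
proof (rule ccontr)
  assume "\<not> (\<forall>c\<in>C. p c = c)"
  define D where "D = {c\<in>C. p c \<noteq> c}"
  have De: "D \<noteq> {}" "finite D" using \<open>\<not> _\<close> fin by (auto simp: D_def)
  define c where "c = Min D"
  have cD: "c \<in> D" using De by (simp add: c_def)
  have minD: "\<And>d. d \<in> D \<Longrightarrow> c \<le> d" using De by (simp add: c_def)
  have cC: "c \<in> C" and pc: "p c \<noteq> c" using cD by (auto simp: D_def)
  have inj: "inj p" using sm strict_mono_imp_inj_on by blast
  show False
  proof (cases "p c < c")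
    case True
    have "p c \<in> C" using pC cC by blast
    moreover have "p c \<notin> D" using minD True by force
    ultimately have "p (p c) = p c" by (simp add: D_def)
    hence "p c = c" using inj by (simp add: inj_eq)
    thus False using pc by simp
  next
    case False
    hence cpc: "c < p c" using pc by simp
    obtain d where d: "d \<in> C" "c = p d" using pC cC by blast
    have "d < c"
    proof (rule ccontr)
      assume "\<not> d < c" hence "c \<le> d" by simp
      hence "p c \<le> p d" using sm by (simp add: strict_mono_less_eq)
      thus False using d cpc by simp
    qed
    hence "d \<notin> D" using minD by force
    hence "p d = d" using d by (simp add: D_def)
    thus False using d \<open>d < c\<close> by simp
  qed
qed

lemma main_G:
  assumes K: "subgrp K" and p: "p \<in> Gc" and pK: "\<forall>k\<in>K. p \<circ> k \<circ> inv_into UNIV p \<in> K"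
  shows "finite C \<Longrightarrow> Stab C \<subseteq> K \<Longrightarrow> p \<in> K"
proof (induction "card C" arbitrary: C rule: less_induct)
  case (less C)
  show ?case
  proof (cases "C \<subseteq> p ` C")
    case True
    have inj: "inj p" using p by (simp add: Gc_iff bij_is_inj)
    have "card (p ` C) = card C" using inj by (simp add: card_image inj_on_subset)
    hence "p ` C = C" using True less(2) by (metis card_subset_eq finite_imageI)
    hence "\<forall>c\<in>C. p c = c" using perm_fix p less(2) by (simp add: Gc_iff)
    hence "p \<in> Stab C" using p by (simp add: Stab_def)
    thus ?thesis using less(3) by blast
  next
    case False
    have S1: "Stab (p ` C) \<subseteq> K" using conj_Stab[OF K p less(3) pK] .
    have S2: "Stab (C \<inter> p ` C) \<subseteq> K" using gen_full[OF K less(2) less(3)] S1 less(2) by simp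
    have "card (C \<inter> p ` C) < card C"
      using False less(2) by (intro psubset_card_mono) auto
    thus ?thesis using less S2 by simp
  qed
qed

lemma openin_AutR_top: "openin AutR_top U \<longleftrightarrow> AutR_open U"
  by (simp add: AutR_top_def istopology_AutR_open)

lemma topspace_AutR_top: "topspace AutR_top = Gc"
proof -
  have "AutR_open Gc" by (auto simp: AutR_open_def)
  thus ?thesis unfolding topspace_def openin_AutR_top by (auto simp: AutR_open_def)
qed

lemma one_AutR [simp]: "\<one>\<^bsub>AutR\<^esub> = id" and mult_AutR [simp]: "x \<otimes>\<^bsub>AutR\<^esub> y = x \<circ> y"
  by (simp_all add: AutR_def)

lemma open_slice1:
  assumes "openin (prod_topology T S) W" "y \<in> topspace S"
  shows "openin T {x \<in> topspace T. (x, y) \<in> W}"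
  using openin_continuous_map_preimage[OF continuous_map_pairedI[OF continuous_map_id[unfolded id_def]] assms(1)]
    assms(2) by simp

lemma open_slice2:
  assumes "openin (prod_topology T S) W" "x \<in> topspace T"
  shows "openin S {y \<in> topspace S. (x, y) \<in> W}"
  using openin_continuous_map_preimage[OF continuous_map_pairedI[OF _ continuous_map_id[unfolded id_def]] assms(1)]
    assms(2) by simp

theorem proposition5p13:
  fixes H :: "'h monoid" and S :: "'h topology"
    and Z :: "'z set" and act :: "((real \<Rightarrow> real) \<times> 'h) \<Rightarrow> 'z \<Rightarrow> 'z"
  assumes "pro_oligomorphic H S"
    and "transitive_G_set (AutR \<times>\<times> H) (prod_topology AutR_top S) Z act"
  shows "\<exists>(X :: 'z set) a (Y :: 'z set) b.
           transitive_G_set AutR AutR_top X a \<and>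
           transitive_G_set H S Y b \<and>
           G_set_iso (AutR \<times>\<times> H) Z act (X \<times> Y) (prod_action a b)"
proof -
  have grp: "group H" and tsH: "topspace S = carrier H"
    using assms(1) by (auto simp: pro_oligomorphic_def topological_group_def)
  interpret H: group H by (rule grp)
  let ?e = "\<one>\<^bsub>H\<^esub>"
  let ?T = "prod_topology AutR_top S"
  have sm: "smooth_action (AutR \<times>\<times> H) ?T Z act" and tr: "transitive_action (AutR \<times>\<times> H) Z act"
    using assms(2) by (auto simp: transitive_G_set_def)
  have A1: "\<And>g h z. g \<in> Gc \<Longrightarrow> h \<in> carrier H \<Longrightarrow> z \<in> Z \<Longrightarrow> act (g, h) z \<in> Z"
    using sm by (auto simp: smooth_action_def is_action_def)
  have A2: "\<And>z. z \<in> Z \<Longrightarrow> act (id, ?e) z = z"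
    using sm by (auto simp: smooth_action_def is_action_def)
  have A3: "\<And>g h g' h' z. g \<in> Gc \<Longrightarrow> h \<in> carrier H \<Longrightarrow> g' \<in> Gc \<Longrightarrow> h' \<in> carrier H \<Longrightarrow> z \<in> Z \<Longrightarrow>
      act (g \<circ> g', h \<otimes>\<^bsub>H\<^esub> h') z = act (g, h) (act (g', h') z)"
  proof -
    fix g h g' h' z assume "g \<in> Gc" "h \<in> carrier H" "g' \<in> Gc" "h' \<in> carrier H" "z \<in> Z"
    thus "act (g \<circ> g', h \<otimes>\<^bsub>H\<^esub> h') z = act (g, h) (act (g', h') z)"
      using sm unfolding smooth_action_def is_action_def
      by (auto dest!: bspec[of _ _ "(g,h)"] simp: mult_DirProd')
  qed
  have Aopen: "\<And>z. z \<in> Z \<Longrightarrow> openin ?T {x \<in> Gc \<times> carrier H. act x z = z}"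
    using sm by (auto simp: smooth_action_def)
  have open1: "openin AutR_top {g \<in> Gc. act (g, ?e) z = z}" if "z \<in> Z" for z
    using open_slice1[OF Aopen[OF that], of ?e] tsH topspace_AutR_top by simp
  have open2: "openin S {h \<in> carrier H. act (id, h) z = z}" if "z \<in> Z" for z
    using open_slice2[OF Aopen[OF that], of id] tsH topspace_AutR_top Gc_id by simp
  have cancel: "act (inv_into UNIV g, inv\<^bsub>H\<^esub> h) (act (g, h) z) = z"
    if "g \<in> Gc" "h \<in> carrier H" "z \<in> Z" for g h z
  proof -
    have "act (inv_into UNIV g, inv\<^bsub>H\<^esub> h) (act (g, h) z) = act (inv_into UNIV g \<circ> g, inv\<^bsub>H\<^esub> h \<otimes>\<^bsub>H\<^esub> h) z"
      using A3[of "inv_into UNIV g" "inv\<^bsub>H\<^esub> h" g h z] that Gc_inv[OF that(1)] by simp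
    also have "inv_into UNIV g \<circ> g = id" using Gc_inv_l[OF that(1)] by (simp add: fun_eq_iff)
    finally show ?thesis using that A2 by (simp add: id_def)
  qed
  have split1: "act (g, h) z = act (g, ?e) (act (id, h) z)" if "g \<in> Gc" "h \<in> carrier H" "z \<in> Z" for g h z
    using A3[of g ?e id h z] that Gc_id by simp
  have split2: "act (g, h) z = act (id, h) (act (g, ?e) z)" if "g \<in> Gc" "h \<in> carrier H" "z \<in> Z" for g h z
    using A3[of id h g ?e z] that Gc_id by simp
  obtain z0 where z0: "z0 \<in> Z" using tr by (auto simp: transitive_action_def)
  \<comment> \<open>Key property: the stabilizer of z0 splits\<close>
  have KP: "act (g, ?e) z0 = z0" if g: "g \<in> Gc" and h: "h \<in> carrier H" and gh: "act (g, h) z0 = z0" for g h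
  proof -
    define K where "K = {k \<in> Gc. act (k, ?e) z0 = z0}"
    have "subgrp K"
      unfolding subgrp_def
    proof (intro conjI ballI)
      show "K \<subseteq> Gc" by (auto simp: K_def)
      fix k1 k2 assume "k1 \<in> K" "k2 \<in> K"
      thus "k1 \<circ> k2 \<in> K" using A3[of k1 ?e k2 ?e z0] z0 by (auto simp: K_def Gc_comp)
    next
      fix k assume k: "k \<in> K"
      hence kG: "k \<in> Gc" by (simp add: K_def)
      have "act (inv_into UNIV k, inv\<^bsub>H\<^esub> ?e) (act (k, ?e) z0) = z0" using cancel[OF kG H.one_closed z0] by simp
      thus "inv_into UNIV k \<in> K" using k Gc_inv[OF kG] by (simp add: K_def)
    qed
    moreover have "openin AutR_top K" using open1[OF z0] by (simp add: K_def)
    moreover have "id \<in> K" using A2 z0 Gc_id by (simp add: K_def)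
    ultimately obtain A where A: "finite A" "{k \<in> Gc. \<forall>a\<in>A. k a = id a} \<subseteq> K"
      by (auto simp: openin_AutR_top AutR_open_def)
    have SA: "Stab A \<subseteq> K" using A(2) by (simp add: Stab_def)
    have "\<forall>k\<in>K. g \<circ> k \<circ> inv_into UNIV g \<in> K"
    proof
      fix k assume k: "k \<in> K"
      hence kG: "k \<in> Gc" by (simp add: K_def)
      let ?gi = "inv_into UNIV g" and ?hi = "inv\<^bsub>H\<^esub> h"
      have w: "act (?gi, ?hi) z0 = z0" using cancel[OF g h z0] gh by simp
      have "act (g \<circ> k \<circ> ?gi, (h \<otimes>\<^bsub>H\<^esub> ?e) \<otimes>\<^bsub>H\<^esub> ?hi) z0
          = act (g \<circ> k, h \<otimes>\<^bsub>H\<^esub> ?e) (act (?gi, ?hi) z0)"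
        using A3[of "g \<circ> k" "h \<otimes>\<^bsub>H\<^esub> ?e" ?gi ?hi z0] g h kG Gc_inv[OF g] Gc_comp z0 by simp
      also have "\<dots> = act (g, h) (act (k, ?e) (act (?gi, ?hi) z0))"
        using A3[of g h k ?e "act (?gi, ?hi) z0"] g h kG Gc_inv[OF g] z0 A1 by simp
      also have "\<dots> = z0" using w k gh by (simp add: K_def)
      finally have "act (g \<circ> k \<circ> ?gi, ?e) z0 = z0" using h by simp
      thus "g \<circ> k \<circ> ?gi \<in> K" using g kG Gc_inv[OF g] Gc_comp by (simp add: K_def)
    qed
    hence "g \<in> K" using main_G[OF \<open>subgrp K\<close> g _ A(1) SA] by blast
    thus ?thesis by (simp add: K_def)
  qed
  have KP2: "act (id, h) z0 = z0" if g: "g \<in> Gc" and h: "h \<in> carrier H" and gh: "act (g, h) z0 = z0" for g h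
  proof -
    let ?w = "act (id, h) z0"
    have wZ: "?w \<in> Z" using A1 Gc_id h z0 by simp
    have e1: "act (g, ?e) ?w = z0" using split1[OF g h z0] gh by simp
    have "?w = act (inv_into UNIV g, inv\<^bsub>H\<^esub> ?e) (act (g, ?e) ?w)" using cancel[OF g H.one_closed wZ] by simp
    also have "\<dots> = act (inv_into UNIV g, inv\<^bsub>H\<^esub> ?e) (act (g, ?e) z0)" using e1 KP[OF g h gh] by simp
    also have "\<dots> = z0" using cancel[OF g H.one_closed z0] .
    finally show ?thesis .
  qed
  have EQ: "act (g, ?e) z0 = act (g', ?e) z0 \<and> act (id, h) z0 = act (id, h') z0"
    if g: "g \<in> Gc" and h: "h \<in> carrier H" and g': "g' \<in> Gc" and h': "h' \<in> carrier H"
      and eq: "act (g, h) z0 = act (g', h') z0" for g h g' h'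
  proof -
    let ?gi = "inv_into UNIV g'" and ?hi = "inv\<^bsub>H\<^esub> h'"
    let ?q = "?gi \<circ> g" and ?r = "?hi \<otimes>\<^bsub>H\<^esub> h"
    have giG: "?gi \<in> Gc" using Gc_inv[OF g'] .
    have qG: "?q \<in> Gc" using Gc_comp[OF giG g] .
    have rH: "?r \<in> carrier H" using h h' by simp
    have "act (?q, ?r) z0 = act (?gi, ?hi) (act (g, h) z0)" using A3[OF giG H.inv_closed[OF h'] g h z0] h' by simp
    also have "\<dots> = z0" using eq cancel[OF g' h' z0] by simp
    finally have qr: "act (?q, ?r) z0 = z0" .
    have q0: "act (?q, ?e) z0 = z0" using KP[OF qG rH qr] .
    have r0: "act (id, ?r) z0 = z0" using KP2[OF qG rH qr] .
    have gq: "g' \<circ> ?q = g" using Gc_inv_r[OF g'] by (simp add: fun_eq_iff)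
    have hr: "h' \<otimes>\<^bsub>H\<^esub> ?r = h" using h h' by (metis H.inv_closed H.m_assoc H.r_inv H.l_one)
    have "act (g, ?e) z0 = act (g' \<circ> ?q, ?e \<otimes>\<^bsub>H\<^esub> ?e) z0" using gq by simp
    also have "\<dots> = act (g', ?e) (act (?q, ?e) z0)" using A3[OF g' H.one_closed qG H.one_closed z0] by simp
    finally have 1: "act (g, ?e) z0 = act (g', ?e) z0" using q0 by simp
    have "act (id, h) z0 = act (id \<circ> id, h' \<otimes>\<^bsub>H\<^esub> ?r) z0" using hr by simp
    also have "\<dots> = act (id, h') (act (id, ?r) z0)" using A3[OF Gc_id h' Gc_id rH z0] .
    finally have 2: "act (id, h) z0 = act (id, h') z0" using r0 by simp
    show ?thesis using 1 2 by simp
  qed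
  define X where "X = {act (g, ?e) z0 | g. g \<in> Gc}"
  define Y where "Y = {act (id, h) z0 | h. h \<in> carrier H}"
  define a where "a = (\<lambda>g x. act (g, ?e) x)"
  define b where "b = (\<lambda>h y. act (id, h) y)"
  have XZ: "X \<subseteq> Z" using A1 z0 by (auto simp: X_def)
  have YZ: "Y \<subseteq> Z" using A1 z0 Gc_id by (auto simp: Y_def)
  have z0X: "z0 \<in> X" using A2[OF z0] Gc_id unfolding X_def by force
  have z0Y: "z0 \<in> Y" using A2[OF z0] unfolding Y_def by force
  have tX: "transitive_G_set AutR AutR_top X a"
    unfolding transitive_G_set_def smooth_action_def is_action_def transitive_action_def
  proof (intro conjI ballI)
    fix g x assume g: "g \<in> carrier AutR" and x: "x \<in> X"
    then obtain g0 where g0: "g0 \<in> Gc" "x = act (g0, ?e) z0" by (auto simp: X_def)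
    have "a g x = act (g \<circ> g0, ?e \<otimes>\<^bsub>H\<^esub> ?e) z0" using A3[OF g H.one_closed g0(1) H.one_closed z0] g0 by (simp add: a_def)
    thus "a g x \<in> X" using Gc_comp[OF g g0(1)] by (auto simp: X_def)
  next
    fix x assume "x \<in> X" thus "a \<one>\<^bsub>AutR\<^esub> x = x" using XZ A2 by (auto simp: a_def)
  next
    fix g h x assume "g \<in> carrier AutR" "h \<in> carrier AutR" "x \<in> X"
    thus "a (g \<otimes>\<^bsub>AutR\<^esub> h) x = a g (a h x)" using XZ A3[of g ?e h ?e x] by (auto simp: a_def)
  next
    fix x assume "x \<in> X"
    thus "openin AutR_top {g \<in> carrier AutR. a g x = x}" using XZ open1 by (auto simp: a_def)
  next
    show "X \<noteq> {}" using z0X by blast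
  next
    fix x y assume "x \<in> X" "y \<in> X"
    then obtain g1 g2 where g: "g1 \<in> Gc" "x = act (g1, ?e) z0" "g2 \<in> Gc" "y = act (g2, ?e) z0"
      by (auto simp: X_def)
    let ?k = "g2 \<circ> inv_into UNIV g1"
    have kG: "?k \<in> Gc" using Gc_comp[OF g(3) Gc_inv[OF g(1)]] .
    have "a ?k x = act (?k \<circ> g1, ?e \<otimes>\<^bsub>H\<^esub> ?e) z0" using A3[OF kG H.one_closed g(1) H.one_closed z0] g by (simp add: a_def)
    also have "?k \<circ> g1 = g2" using Gc_inv_l[OF g(1)] by (simp add: fun_eq_iff)
    also have "?e \<otimes>\<^bsub>H\<^esub> ?e = ?e" by simp
    finally have "a ?k x = y" using g(4) by (simp only:)
    thus "\<exists>g\<in>carrier AutR. a g x = y" using kG by blast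
  qed
  have tY: "transitive_G_set H S Y b"
    unfolding transitive_G_set_def smooth_action_def is_action_def transitive_action_def
  proof (intro conjI ballI)
    fix h y assume h: "h \<in> carrier H" and y: "y \<in> Y"
    then obtain h0 where h0: "h0 \<in> carrier H" "y = act (id, h0) z0" by (auto simp: Y_def)
    have "b h y = act (id \<circ> id, h \<otimes>\<^bsub>H\<^esub> h0) z0" using A3[OF Gc_id h Gc_id h0(1) z0] h0 by (simp add: b_def)
    thus "b h y \<in> Y" using h h0 by (auto simp: Y_def)
  next
    fix y assume "y \<in> Y" thus "b \<one>\<^bsub>H\<^esub> y = y" using YZ A2 by (auto simp: b_def)
  next
    fix g h y assume "g \<in> carrier H" "h \<in> carrier H" "y \<in> Y"
    thus "b (g \<otimes>\<^bsub>H\<^esub> h) y = b g (b h y)" using YZ A3[of id g id h y] Gc_id by (auto simp: b_def)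
  next
    fix y assume "y \<in> Y"
    thus "openin S {h \<in> carrier H. b h y = y}" using YZ open2 by (auto simp: b_def)
  next
    show "Y \<noteq> {}" using z0Y by blast
  next
    fix x y assume "x \<in> Y" "y \<in> Y"
    then obtain h1 h2 where h: "h1 \<in> carrier H" "x = act (id, h1) z0" "h2 \<in> carrier H" "y = act (id, h2) z0"
      by (auto simp: Y_def)
    let ?k = "h2 \<otimes>\<^bsub>H\<^esub> inv\<^bsub>H\<^esub> h1"
    have kH: "?k \<in> carrier H" using h by simp
    have "b ?k x = act (id \<circ> id, ?k \<otimes>\<^bsub>H\<^esub> h1) z0" using A3[OF Gc_id kH Gc_id h(1) z0] h by (simp add: b_def)
    also have "?k \<otimes>\<^bsub>H\<^esub> h1 = h2" using h by (simp add: H.m_assoc)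
    also have "id \<circ> id = id" by simp
    finally have "b ?k x = y" using h(4) by (simp only:)
    thus "\<exists>g\<in>carrier H. b g x = y" using kH by blast
  qed
  define F where "F = (\<lambda>(g, h). (act (g, ?e) z0, act (id, h) z0))"
  define \<sigma> where "\<sigma> = (\<lambda>z. SOME gh. gh \<in> Gc \<times> carrier H \<and> act gh z0 = z)"
  define f where "f = (\<lambda>z. F (\<sigma> z))"
  have \<sigma>: "\<sigma> z \<in> Gc \<times> carrier H \<and> act (\<sigma> z) z0 = z" if zZ: "z \<in> Z" for z
  proof -
    have tr2: "\<forall>x\<in>Z. \<forall>y\<in>Z. \<exists>g\<in>carrier (AutR \<times>\<times> H). act g x = y"
      using tr unfolding transitive_action_def by (rule conjunct2)
    obtain gh where "gh \<in> carrier (AutR \<times>\<times> H)" "act gh z0 = z" using bspec[OF bspec[OF tr2 z0] zZ] by blast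
    hence "\<exists>gh. gh \<in> Gc \<times> carrier H \<and> act gh z0 = z" by auto
    thus ?thesis unfolding \<sigma>_def by (rule someI_ex)
  qed
  have fF: "f (act (g, h) z0) = F (g, h)" if "g \<in> Gc" "h \<in> carrier H" for g h
  proof -
    have z: "act (g, h) z0 \<in> Z" using A1 that z0 by simp
    obtain g' h' where s: "\<sigma> (act (g, h) z0) = (g', h')" by (cases "\<sigma> (act (g, h) z0)")
    have "g' \<in> Gc" "h' \<in> carrier H" "act (g', h') z0 = act (g, h) z0" using \<sigma>[OF z] s by auto
    thus ?thesis using EQ[of g' h' g h] that s by (simp add: f_def F_def)
  qed
  have zrep: "\<exists>g h. g \<in> Gc \<and> h \<in> carrier H \<and> z = act (g, h) z0" if "z \<in> Z" for z
    using \<sigma>[OF that] by (metis mem_Times_iff prod.collapse)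
  have iso: "G_set_iso (AutR \<times>\<times> H) Z act (X \<times> Y) (prod_action a b)"
    unfolding G_set_iso_def
  proof (intro exI conjI ballI)
    show "bij_betw f Z (X \<times> Y)"
      unfolding bij_betw_def
    proof (intro conjI)
      show "inj_on f Z"
      proof (rule inj_onI)
        fix z z' assume z: "z \<in> Z" and z': "z' \<in> Z" and ff: "f z = f z'"
        obtain g h where gh: "g \<in> Gc" "h \<in> carrier H" "z = act (g, h) z0" using zrep[OF z] by blast
        obtain g' h' where gh': "g' \<in> Gc" "h' \<in> carrier H" "z' = act (g', h') z0" using zrep[OF z'] by blast
        have e: "act (g, ?e) z0 = act (g', ?e) z0" "act (id, h) z0 = act (id, h') z0"
          using ff fF[OF gh(1,2)] fF[OF gh'(1,2)] gh gh' by (auto simp: F_def)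
        have "z = act (g, ?e) (act (id, h') z0)" using split1[OF gh(1,2) z0] gh e by simp
        also have "\<dots> = act (g, h') z0" using split1[OF gh(1) gh'(2) z0] by simp
        also have "\<dots> = act (id, h') (act (g', ?e) z0)" using split2[OF gh(1) gh'(2) z0] e by simp
        also have "\<dots> = z'" using split2[OF gh'(1,2) z0] gh' by simp
        finally show "z = z'" .
      qed
    next
      show "f ` Z = X \<times> Y"
      proof
        show "f ` Z \<subseteq> X \<times> Y"
        proof
          fix w assume "w \<in> f ` Z"
          then obtain z where z: "z \<in> Z" "w = f z" by blast
          obtain g h where gh: "g \<in> Gc" "h \<in> carrier H" "z = act (g, h) z0" using zrep[OF z(1)] by blast
          show "w \<in> X \<times> Y" using fF[OF gh(1,2)] gh z by (auto simp: F_def X_def Y_def)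
        qed
      next
        show "X \<times> Y \<subseteq> f ` Z"
        proof
          fix w assume "w \<in> X \<times> Y"
          then obtain g h where gh: "g \<in> Gc" "h \<in> carrier H" "w = F (g, h)" by (auto simp: X_def Y_def F_def)
          have "act (g, h) z0 \<in> Z" using A1 gh z0 by simp
          thus "w \<in> f ` Z" using fF[OF gh(1,2)] gh by force
        qed
      qed
    qed
  next
    fix gh z assume gh: "gh \<in> carrier (AutR \<times>\<times> H)" and z: "z \<in> Z"
    obtain g h where ghd: "gh = (g, h)" "g \<in> Gc" "h \<in> carrier H" using gh by auto
    obtain g0 h0 where r: "g0 \<in> Gc" "h0 \<in> carrier H" "z = act (g0, h0) z0" using zrep[OF z] by blast
    have "act gh z = act (g \<circ> g0, h \<otimes>\<^bsub>H\<^esub> h0) z0" using A3[OF ghd(2,3) r(1,2) z0] ghd r by simp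
    hence "f (act gh z) = F (g \<circ> g0, h \<otimes>\<^bsub>H\<^esub> h0)" using fF Gc_comp ghd r by simp
    also have "\<dots> = (act (g, ?e) (act (g0, ?e) z0), act (id, h) (act (id, h0) z0))"
      using A3[OF ghd(2) H.one_closed r(1) H.one_closed z0] A3[OF Gc_id ghd(3) Gc_id r(2) z0] by (simp add: F_def)
    also have "\<dots> = prod_action a b gh (f z)"
      using fF[OF r(1,2)] r ghd by (simp add: F_def prod_action_def a_def b_def)
    finally show "f (act gh z) = prod_action a b gh (f z)" .
  qed
  show ?thesis using tX tY iso by blast
qed

end
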